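(* Let $f,g\in C[0,1]$ satisfy $f(x)\neq0$ and $g(x)\neq0$ for all $x\in[0,1]$, and suppose $\overline{\dim}_B G(f)\neq\overline{\dim}_B G(g)$. Then $$\overline{\dim}_B G(f\cdot g)=\max\{\overline{\dim}_B G(f),\ \overline{\dim}_B G(g)\}.$$
   Context: $C[0,1]$ is the space of real-valued continuous functions on $[0,1]$; $G(f)=\{(x,f(x)):x\in[0,1]\}\subset\mathbb{R}^2$ is the graph of $f$; $f\cdot g$ is the pointwise product. For a nonempty bounded set $F$, $N_\delta(F)$ is the smallest number of sets of diameter at most $\delta$ covering $F$, and $\overline{\dim}_B F=\limsup_{\delta\to0}\frac{\log N_\delta(F)}{-\log\delta}$. *)

theory Defs
  imports "HOL-Analysis.Analysis" "HOL-Library.Liminf_Limsup"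
begin

text \<open>Graph of f over [0,1], as a subset of the Euclidean plane (real \<times> real carries the Euclidean metric).\<close>
definition graph01 :: "(real \<Rightarrow> real) \<Rightarrow> (real \<times> real) set" where
  "graph01 f = {(x, f x) | x. x \<in> {0..1}}"

definition covering_number :: "'a::metric_space set \<Rightarrow> real \<Rightarrow> nat" where
  "covering_number F \<delta> = (LEAST n. \<exists>C. finite C \<and> card C = n \<and>
      (\<forall>S\<in>C. bounded S \<and> diameter S \<le> \<delta>) \<and> F \<subseteq> \<Union>C)"

definition upper_box_dim :: "'a::metric_space set \<Rightarrow> ereal" where
  "upper_box_dim F = Limsup (at_right 0)
      (\<lambda>\<delta>. ereal (ln (real (covering_number F \<delta>)) / - ln \<delta>))"

end

theory Submission
  imports Defs
begin

definition ncol :: "real \<Rightarrow> nat" where "ncol d = nat \<lceil>1/d\<rceil>"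
definition colL :: "real \<Rightarrow> nat \<Rightarrow> real" where "colL d j = real j * d"
definition colR :: "real \<Rightarrow> nat \<Rightarrow> real" where "colR d j = min (real (Suc j) * d) 1"
definition col :: "real \<Rightarrow> nat \<Rightarrow> real set" where "col d j = {colL d j .. colR d j}"
definition lo :: "(real \<Rightarrow> real) \<Rightarrow> real \<Rightarrow> nat \<Rightarrow> real" where "lo h d j = Inf (h ` col d j)"
definition hi :: "(real \<Rightarrow> real) \<Rightarrow> real \<Rightarrow> nat \<Rightarrow> real" where "hi h d j = Sup (h ` col d j)"
definition osc :: "(real \<Rightarrow> real) \<Rightarrow> real \<Rightarrow> nat \<Rightarrow> real" where "osc h d j = hi h d j - lo h d j"

lemma col_basic:
  assumes "d > 0" "j < ncol d"
  shows "0 \<le> colL d j" "colL d j \<le> colR d j" "colR d j \<le> 1" "col d j \<subseteq> {0..1}"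
proof -
  have "real j < 1/d" using assms unfolding ncol_def by linarith
  then have "real j * d < 1" using assms by (simp add: field_simps)
  then show "0 \<le> colL d j" "colL d j \<le> colR d j" "colR d j \<le> 1"
    using assms by (auto simp: colL_def colR_def algebra_simps)
  then show "col d j \<subseteq> {0..1}" by (auto simp: col_def)
qed

lemma col_cover:
  assumes "d > 0" "x \<in> {0..1}"
  shows "\<exists>j<ncol d. x \<in> col d j"
proof -
  define j where "j = min (nat \<lfloor>x/d\<rfloor>) (ncol d - 1)"
  have "0 < 1/d" using assms by simp
  then have "0 < \<lceil>1/d\<rceil>" by simp
  then have n1: "ncol d \<ge> 1" unfolding ncol_def by linarith
  have jlt: "j < ncol d" using n1 unfolding j_def by linarith
  have x0: "0 \<le> x/d" using assms by simp
  have fl0: "real (nat \<lfloor>x/d\<rfloor>) = of_int \<lfloor>x/d\<rfloor>" using x0 by simp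
  have fl: "real (nat \<lfloor>x/d\<rfloor>) \<le> x/d" "x/d < real (nat \<lfloor>x/d\<rfloor>) + 1"
    unfolding fl0 using floor_correct[of "x/d"] by auto
  have "real j * d \<le> x"
  proof -
    have "real j \<le> x/d" using fl unfolding j_def by linarith
    then show ?thesis using assms by (simp add: field_simps)
  qed
  moreover have "x \<le> real (Suc j) * d"
  proof (cases "nat \<lfloor>x/d\<rfloor> \<le> ncol d - 1")
    case True
    then have "j = nat \<lfloor>x/d\<rfloor>" unfolding j_def by simp
    then have "x/d \<le> real (Suc j)" using fl by linarith
    then show ?thesis using assms by (simp add: field_simps)
  next
    case False
    then have "j = ncol d - 1" unfolding j_def by simp
    then have "real (Suc j) = real (ncol d)" using n1 by simp
    also have "\<dots> \<ge> 1/d" unfolding ncol_def by linarith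
    finally have "1/d \<le> real (Suc j)" .
    then have "1 \<le> real (Suc j) * d" using assms by (simp add: field_simps)
    then show ?thesis using assms by simp
  qed
  ultimately show ?thesis using jlt assms by (auto simp: col_def colL_def colR_def)
qed

lemma col_sep:
  assumes "d > 0" "j + 2 \<le> j'" "x \<in> col d j" "x' \<in> col d j'"
  shows "x' - x \<ge> d"
proof -
  have "x \<le> real (Suc j) * d" "real j' * d \<le> x'" using assms by (auto simp: col_def colL_def colR_def)
  moreover have "real (Suc j) * d + d \<le> real j' * d"
  proof -
    have "real (Suc j) + 1 \<le> real j'" using assms by linarith
    then show ?thesis using assms by (metis distrib_right mult_1 mult_right_mono less_imp_le)
  qed
  ultimately show ?thesis by linarith
qed

lemma col_img:
  assumes "continuous_on {0..1} h" "d > 0" "j < ncol d"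
  shows "h ` col d j = {lo h d j .. hi h d j}" "lo h d j \<le> hi h d j"
proof -
  have cb: "colL d j \<le> colR d j" "col d j \<subseteq> {0..1}" using col_basic[OF assms(2,3)] by auto
  have "continuous_on (col d j) h" using assms(1) cb continuous_on_subset by blast
  then obtain c e where ce: "h ` col d j = {c..e}" "c \<le> e"
    using continuous_image_closed_interval[OF cb(1)] unfolding col_def by blast
  then have "lo h d j = c" "hi h d j = e" unfolding lo_def hi_def by auto
  then show "h ` col d j = {lo h d j .. hi h d j}" "lo h d j \<le> hi h d j" using ce by auto
qed

lemma cn_le:
  assumes "finite C" "\<forall>S\<in>C. bounded S \<and> diameter S \<le> e" "F \<subseteq> \<Union>C"
  shows "covering_number F e \<le> card C"
  unfolding covering_number_def by (rule Least_le) (use assms in blast)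

lemma cn_ge:
  fixes F :: "'a::metric_space set" and \<phi> :: "'b \<Rightarrow> 'a"
  assumes "finite C" "\<forall>S\<in>C. bounded S \<and> diameter S \<le> e" "F \<subseteq> \<Union>C"
    and "finite I" "\<phi> ` I \<subseteq> F" "\<And>a b. a \<in> I \<Longrightarrow> b \<in> I \<Longrightarrow> a \<noteq> b \<Longrightarrow> dist (\<phi> a) (\<phi> b) > e"
  shows "card I \<le> covering_number F e"
proof -
  let ?P = "\<lambda>n. \<exists>C. finite C \<and> card C = n \<and> (\<forall>S\<in>C. bounded S \<and> diameter S \<le> e) \<and> F \<subseteq> \<Union>C"
  have ex: "?P (card C)" using assms by blast
  then obtain D where D: "finite D" "card D = covering_number F e" "\<forall>S\<in>D. bounded S \<and> diameter S \<le> e" "F \<subseteq> \<Union>D"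
    unfolding covering_number_def using LeastI_ex[of ?P] by blast
  have "\<forall>a\<in>I. \<exists>S\<in>D. \<phi> a \<in> S" using assms(5) D(4) by blast
  then obtain \<sigma> where \<sigma>: "\<And>a. a \<in> I \<Longrightarrow> \<sigma> a \<in> D \<and> \<phi> a \<in> \<sigma> a" by metis
  have "inj_on \<sigma> I"
  proof (rule inj_onI, rule ccontr)
    fix a b assume ab: "a \<in> I" "b \<in> I" "\<sigma> a = \<sigma> b" "a \<noteq> b"
    have "bounded (\<sigma> a)" "\<phi> a \<in> \<sigma> a" "\<phi> b \<in> \<sigma> a"
      using \<sigma>[OF ab(1)] \<sigma>[OF ab(2)] D(3) ab(3) by auto
    then have "dist (\<phi> a) (\<phi> b) \<le> diameter (\<sigma> a)"
      by (rule diameter_bounded_bound)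
    also have "\<dots> \<le> e" using \<sigma>[of a] D(3) ab by blast
    finally show False using assms(6)[OF ab(1,2,4)] by simp
  qed
  then have "card I \<le> card D" using card_inj_on_le[of \<sigma> I D] \<sigma> D(1) by blast
  then show ?thesis using D(2) by simp
qed

lemma box_diam:
  assumes "d > 0" "j < ncol d"
  shows "bounded (col d j \<times> {a..a+d}) \<and> diameter (col d j \<times> {a..a+d}) \<le> 2*d"
proof
  show "bounded (col d j \<times> {a..a+d})" unfolding col_def by (intro bounded_Times) auto
  show "diameter (col d j \<times> {a..a+d}) \<le> 2*d"
  proof (rule diameter_le)
    show "col d j \<times> {a..a+d} \<noteq> {} \<or> 0 \<le> 2*d" using assms by simp
    fix p q assume pq: "p \<in> col d j \<times> {a..a+d}" "q \<in> col d j \<times> {a..a+d}"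
    obtain x y x' y' where p: "p = (x,y)" and q: "q = (x',y')" by (cases p, cases q) auto
    have cx: "x \<in> col d j" "x' \<in> col d j" "y \<in> {a..a+d}" "y' \<in> {a..a+d}" using pq p q by auto
    have "\<bar>x - x'\<bar> \<le> d"
    proof -
      have "real j * d \<le> x" "x \<le> real (Suc j) * d" "real j * d \<le> x'" "x' \<le> real (Suc j) * d"
        using cx by (auto simp: col_def colL_def colR_def)
      then show ?thesis by (simp add: algebra_simps abs_le_iff)
    qed
    moreover have "\<bar>y - y'\<bar> \<le> d" using cx by (auto simp: abs_le_iff)
    moreover have "norm (p - q) \<le> norm (x - x') + norm (y - y')"
      using norm_Pair_le[of "x - x'" "y - y'"] p q by simp
    ultimately show "norm (p - q) \<le> 2*d" by simp
  qed
qed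

lemma cover_upper:
  assumes h: "continuous_on {0..1} h" and d: "d > 0"
  shows "\<exists>C. finite C \<and> (\<forall>S\<in>C. bounded S \<and> diameter S \<le> 2*d) \<and> graph01 h \<subseteq> \<Union>C
           \<and> real (card C) \<le> (\<Sum>j<ncol d. osc h d j / d + 1)"
proof -
  define K where "K j = nat \<lfloor>osc h d j / d\<rfloor>" for j
  define box where "box j k = col d j \<times> {lo h d j + real k * d .. lo h d j + real k * d + d}" for j k
  define IDX where "IDX = Sigma {..<ncol d} (\<lambda>j. {..K j})"
  define C where "C = (\<lambda>(j,k). box j k) ` IDX"
  have fI: "finite IDX" unfolding IDX_def by auto
  have "finite C" unfolding C_def using fI by simp
  moreover have "\<forall>S\<in>C. bounded S \<and> diameter S \<le> 2*d"
    unfolding C_def IDX_def box_def using box_diam[OF d] by auto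
  moreover have "graph01 h \<subseteq> \<Union>C"
  proof
    fix p assume "p \<in> graph01 h"
    then obtain x where x: "x \<in> {0..1}" "p = (x, h x)" unfolding graph01_def by auto
    obtain j where j: "j < ncol d" "x \<in> col d j" using col_cover[OF d x(1)] by auto
    have hx: "h x \<in> {lo h d j .. hi h d j}" using col_img[OF h d j(1)] j(2) by blast
    define k where "k = nat \<lfloor>(h x - lo h d j) / d\<rfloor>"
    have q0: "0 \<le> (h x - lo h d j) / d" using hx d by simp
    have k0: "real k = of_int \<lfloor>(h x - lo h d j) / d\<rfloor>" unfolding k_def using q0 by simp
    have kk: "real k \<le> (h x - lo h d j) / d" "(h x - lo h d j) / d < real k + 1"
      unfolding k0 using floor_correct[of "(h x - lo h d j) / d"] by auto
    have "k \<le> K j"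
    proof -
      have "(h x - lo h d j) / d \<le> osc h d j / d" using hx d unfolding osc_def by (simp add: divide_right_mono)
      then show ?thesis unfolding k_def K_def by (intro nat_mono floor_mono)
    qed
    moreover have "real k * d \<le> h x - lo h d j" using kk(1) d by (simp add: le_divide_eq)
    moreover have "h x - lo h d j < (real k + 1) * d" using kk(2) d by (simp add: divide_less_eq)
    ultimately have "k \<le> K j \<and> h x \<in> {lo h d j + real k * d .. lo h d j + real k * d + d}"
      by (simp add: algebra_simps)
    then have "p \<in> box j k" "(j,k) \<in> IDX" unfolding box_def IDX_def using x j by auto
    then show "p \<in> \<Union>C" unfolding C_def by blast
  qed
  moreover have "real (card C) \<le> (\<Sum>j<ncol d. osc h d j / d + 1)"
  proof -
    have "card C \<le> card IDX" unfolding C_def by (rule card_image_le[OF fI])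
    also have "card IDX = (\<Sum>j<ncol d. K j + 1)" unfolding IDX_def by simp
    finally have "real (card C) \<le> real (\<Sum>j<ncol d. K j + 1)" by (rule of_nat_mono)
    also have "\<dots> = (\<Sum>j<ncol d. real (K j) + 1)" by (simp add: add.commute)
    also have "\<dots> \<le> (\<Sum>j<ncol d. osc h d j / d + 1)"
    proof (rule sum_mono)
      fix j assume "j \<in> {..<ncol d}"
      then have "0 \<le> osc h d j / d" using col_img[OF h d] d unfolding osc_def by simp
      then have "real (K j) = of_int \<lfloor>osc h d j / d\<rfloor>" unfolding K_def by simp
      then show "real (K j) + 1 \<le> osc h d j / d + 1" by simp
    qed
    finally show ?thesis .
  qed
  ultimately show ?thesis by blast
qed

lemma cover_exists:
  assumes h: "continuous_on {0..1} h" and e: "e > 0"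
  shows "\<exists>C. finite C \<and> (\<forall>S\<in>C. bounded S \<and> diameter S \<le> e) \<and> graph01 h \<subseteq> \<Union>C"
  using cover_upper[OF h, of "e/2"] e by auto

lemma cn_upper:
  assumes h: "continuous_on {0..1} h" and d: "d > 0"
  shows "real (covering_number (graph01 h) (2*d)) \<le> (\<Sum>j<ncol d. osc h d j / d + 1)"
proof -
  obtain C where C: "finite C" "\<forall>S\<in>C. bounded S \<and> diameter S \<le> 2*d" "graph01 h \<subseteq> \<Union>C"
     "real (card C) \<le> (\<Sum>j<ncol d. osc h d j / d + 1)" using cover_upper[OF h d] by blast
  have "covering_number (graph01 h) (2*d) \<le> card C" using cn_le[OF C(1-3)] .
  then show ?thesis using C(4) by (meson of_nat_mono order_trans)
qed

lemma cn_lower: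
  assumes h: "continuous_on {0..1} h" and d: "d > 0"
  shows "(\<Sum>j<ncol d. osc h d j / d + 1) \<le> 4 * real (covering_number (graph01 h) (d/2))"
proof -
  define N where "N = covering_number (graph01 h) (d/2)"
  define K where "K j = nat \<lfloor>osc h d j / d\<rfloor>" for j
  define xx where "xx j i = (SOME x. x \<in> col d j \<and> h x = lo h d j + real i * d)" for j i
  define \<phi> where "\<phi> = (\<lambda>(j,i). (xx j i, lo h d j + real i * d))"
  have Kb: "real (K j) \<le> osc h d j / d" "osc h d j / d < real (K j) + 1" if "j < ncol d" for j
  proof -
    have "0 \<le> osc h d j / d" using col_img[OF h d that] d unfolding osc_def by simp
    then have "real (K j) = of_int \<lfloor>osc h d j / d\<rfloor>" unfolding K_def by simp
    then show "real (K j) \<le> osc h d j / d" "osc h d j / d < real (K j) + 1"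
      using floor_correct[of "osc h d j / d"] by auto
  qed
  have xx: "xx j i \<in> col d j \<and> h (xx j i) = lo h d j + real i * d" if "j < ncol d" "i \<le> K j" for j i
  proof -
    have "real i * d \<le> real (K j) * d" using that d by simp
    also have "\<dots> \<le> osc h d j" using Kb(1)[OF that(1)] d by (simp add: le_divide_eq)
    finally have "lo h d j + real i * d \<in> {lo h d j .. hi h d j}" using d unfolding osc_def by simp
    then have "\<exists>x. x \<in> col d j \<and> h x = lo h d j + real i * d" using col_img[OF h d that(1)] by (metis imageE)
    then show ?thesis unfolding xx_def by (rule someI_ex)
  qed
  obtain C where C: "finite C" "\<forall>S\<in>C. bounded S \<and> diameter S \<le> d/2" "graph01 h \<subseteq> \<Union>C"
    using cover_exists[OF h, of "d/2"] d by auto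
  have part: "real (\<Sum>j\<in>{j. j < ncol d \<and> j mod 2 = r}. K j + 1) \<le> real N" for r :: nat
  proof -
    define I where "I = Sigma {j. j < ncol d \<and> j mod 2 = r} (\<lambda>j. {..K j})"
    have fI: "finite I" unfolding I_def by auto
    have img: "\<phi> ` I \<subseteq> graph01 h"
    proof
      fix p assume "p \<in> \<phi> ` I"
      then obtain j i where ji: "j < ncol d" "i \<le> K j" "p = \<phi> (j,i)" unfolding I_def by auto
      then show "p \<in> graph01 h" using xx[OF ji(1,2)] col_basic(4)[OF d ji(1)]
        unfolding graph01_def \<phi>_def by auto
    qed
    have sep: "dist (\<phi> a) (\<phi> b) > d/2" if ab: "a \<in> I" "b \<in> I" "a \<noteq> b" for a b
    proof -
      obtain j i j' i' where a: "a = (j,i)" and b: "b = (j',i')" by (cases a, cases b) auto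
      have j: "j < ncol d" "i \<le> K j" "j mod 2 = r" "j' < ncol d" "i' \<le> K j'" "j' mod 2 = r"
        using ab a b unfolding I_def by auto
      show ?thesis
      proof (cases "j = j'")
        case True
        then have "i \<noteq> i'" using ab a b by auto
        then have "1 \<le> \<bar>real i - real i'\<bar>" by linarith
        then have "d \<le> \<bar>real i - real i'\<bar> * d" using d by simp
        also have "\<dots> = \<bar>real i * d - real i' * d\<bar>" using d
          by (simp add: abs_mult flip: left_diff_distrib)
        also have "\<dots> = dist (snd (\<phi> a)) (snd (\<phi> b))" using True a b unfolding \<phi>_def dist_real_def
          by simp
        also have "\<dots> \<le> dist (\<phi> a) (\<phi> b)" by (rule dist_snd_le)
        finally show ?thesis using d by simp
      next
        case False
        have "j + 2 \<le> j' \<or> j' + 2 \<le> j" using False j by presburger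
        then have "d \<le> \<bar>xx j i - xx j' i'\<bar>"
          using col_sep[OF d, of j j' "xx j i" "xx j' i'"] col_sep[OF d, of j' j "xx j' i'" "xx j i"]
            xx[OF j(1,2)] xx[OF j(4,5)] by auto
        also have "\<dots> = dist (fst (\<phi> a)) (fst (\<phi> b))" using a b unfolding \<phi>_def dist_real_def by simp
        also have "\<dots> \<le> dist (\<phi> a) (\<phi> b)" by (rule dist_fst_le)
        finally show ?thesis using d by simp
      qed
    qed
    have "card I \<le> N" unfolding N_def by (rule cn_ge[OF C fI img sep])
    moreover have "card I = (\<Sum>j\<in>{j. j < ncol d \<and> j mod 2 = r}. K j + 1)" unfolding I_def by simp
    ultimately have "(\<Sum>j\<in>{j. j < ncol d \<and> j mod 2 = r}. K j + 1) \<le> N" by simp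
    then show ?thesis by (rule of_nat_mono)
  qed
  have split: "{..<ncol d} = {j. j < ncol d \<and> j mod 2 = 0} \<union> {j. j < ncol d \<and> j mod 2 = 1}" by auto
  have "(\<Sum>j<ncol d. K j + 1) = (\<Sum>j\<in>{j. j < ncol d \<and> j mod 2 = 0}. K j + 1) + (\<Sum>j\<in>{j. j < ncol d \<and> j mod 2 = 1}. K j + 1)"
    by (subst split, rule sum.union_disjoint) auto
  then have tot: "real (\<Sum>j<ncol d. K j + 1) \<le> 2 * real N" using part[of 0] part[of 1] by simp
  have "(\<Sum>j<ncol d. osc h d j / d + 1) \<le> (\<Sum>j<ncol d. 2 * (real (K j) + 1))"
  proof (rule sum_mono)
    fix j assume "j \<in> {..<ncol d}"
    then show "osc h d j / d + 1 \<le> 2 * (real (K j) + 1)" using Kb(2)[of j] by simp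
  qed
  also have "\<dots> = 2 * real (\<Sum>j<ncol d. K j + 1)" by (simp add: sum_distrib_left add.commute)
  finally show ?thesis using tot unfolding N_def by simp
qed

lemma dim_le:
  fixes E F1 F2 :: "'a::metric_space set"
  assumes C: "C > 0" and ez: "ez > 0"
    and bnd: "\<And>d. 0 < d \<Longrightarrow> d < ez \<Longrightarrow>
       real (covering_number E (4*d)) \<le> C * max (real (covering_number F1 d)) (real (covering_number F2 d))"
    and pos: "\<And>d. d > 0 \<Longrightarrow> covering_number E d \<ge> 1 \<and> covering_number F1 d \<ge> 1 \<and> covering_number F2 d \<ge> 1"
  shows "upper_box_dim E \<le> max (upper_box_dim F1) (upper_box_dim F2)"
  unfolding upper_box_dim_def
proof (subst Limsup_le_iff, intro allI impI)
  let ?L1 = "Limsup (at_right 0) (\<lambda>\<delta>. ereal (ln (real (covering_number F1 \<delta>)) / - ln \<delta>))"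
  let ?L2 = "Limsup (at_right 0) (\<lambda>\<delta>. ereal (ln (real (covering_number F2 \<delta>)) / - ln \<delta>))"
  fix y assume y: "y > max ?L1 ?L2"
  obtain r where r: "max ?L1 ?L2 < ereal r" "ereal r < y" using ereal_dense2[OF y] by blast
  obtain s where s: "ereal r < ereal s" "ereal s < y" using ereal_dense2[OF r(2)] by blast
  have rs: "r < s" using s by simp
  have "eventually (\<lambda>\<delta>. ereal (ln (real (covering_number F1 \<delta>)) / - ln \<delta>) < ereal r) (at_right 0)"
    by (rule Limsup_lessD) (use r in auto)
  moreover have "eventually (\<lambda>\<delta>. ereal (ln (real (covering_number F2 \<delta>)) / - ln \<delta>) < ereal r) (at_right 0)"
    by (rule Limsup_lessD) (use r in auto)
  ultimately have "eventually (\<lambda>\<delta>. ln (real (covering_number F1 \<delta>)) / - ln \<delta> < r \<and>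
       ln (real (covering_number F2 \<delta>)) / - ln \<delta> < r) (at_right 0)"
    by eventually_elim auto
  then obtain b1 where b1: "b1 > 0" "\<And>\<delta>. 0 < \<delta> \<Longrightarrow> \<delta> < b1 \<Longrightarrow> ln (real (covering_number F1 \<delta>)) / - ln \<delta> < r \<and>
       ln (real (covering_number F2 \<delta>)) / - ln \<delta> < r"
    unfolding eventually_at_right_field by auto
  define T where "T = max 0 ((ln C + r * ln 4) / (s - r))"
  define b where "b = min (min (4*b1) (4*ez)) (min 1 (exp (-T)))"
  have b: "b > 0" using b1 ez unfolding b_def by simp
  have "\<forall>\<delta>>0. \<delta> < b \<longrightarrow> ereal (ln (real (covering_number E \<delta>)) / - ln \<delta>) < y"
  proof (intro allI impI)
    fix \<delta> :: real assume \<delta>: "\<delta> > 0" "\<delta> < b"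
    define d where "d = \<delta> / 4"
    have d: "0 < d" "d < b1" "d < ez" "\<delta> = 4*d" using \<delta> unfolding d_def b_def by auto
    have \<delta>1: "\<delta> < 1" using \<delta> unfolding b_def by simp
    define t where "t = - ln \<delta>"
    have tT: "t > T"
    proof -
      have "\<delta> < exp (-T)" using \<delta> unfolding b_def by simp
      then have "ln \<delta> < -T" using \<delta>(1) by (metis ln_exp ln_less_cancel_iff exp_gt_zero)
      then show ?thesis unfolding t_def by simp
    qed
    have t0: "t > 0" using tT unfolding T_def by simp
    have ld: "- ln d = t + ln 4" unfolding t_def d_def using \<delta>(1) by (simp add: ln_div)
    have ld0: "- ln d > 0" proof - have "ln (4::real) > 0" by simp then show ?thesis using ld t0 by linarith qed
    have n1: "ln (real (covering_number F1 d)) < r * (t + ln 4)"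
      using b1(2)[OF d(1,2)] ld0 ld by (simp add: divide_less_eq)
    have n2: "ln (real (covering_number F2 d)) < r * (t + ln 4)"
      using b1(2)[OF d(1,2)] ld0 ld by (simp add: divide_less_eq)
    have p: "covering_number E \<delta> \<ge> 1" "covering_number F1 d \<ge> 1" "covering_number F2 d \<ge> 1"
      using pos \<delta>(1) d(1) by auto
    have "real (covering_number E \<delta>) \<le> C * max (real (covering_number F1 d)) (real (covering_number F2 d))"
      using bnd[OF d(1,3)] d(4) by simp
    then have "ln (real (covering_number E \<delta>)) \<le> ln (C * max (real (covering_number F1 d)) (real (covering_number F2 d)))"
      using p by (subst ln_le_cancel_iff) auto
    also have "\<dots> = ln C + max (ln (real (covering_number F1 d))) (ln (real (covering_number F2 d)))"
      using C p by (simp add: ln_mult max_def)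
    also have "\<dots> < ln C + r * (t + ln 4)" using n1 n2 by simp
    also have "\<dots> \<le> s * t"
    proof -
      have "(ln C + r * ln 4) / (s - r) < t" using tT unfolding T_def by simp
      then have "ln C + r * ln 4 < t * (s - r)" using rs by (simp add: divide_less_eq)
      then show ?thesis by (simp add: algebra_simps)
    qed
    finally have "ln (real (covering_number E \<delta>)) / t < s" using t0 by (simp add: divide_less_eq)
    then have "ereal (ln (real (covering_number E \<delta>)) / - ln \<delta>) < ereal s" unfolding t_def by simp
    then show "ereal (ln (real (covering_number E \<delta>)) / - ln \<delta>) < y" using s(2) by (meson less_trans)
  qed
  then show "eventually (\<lambda>\<delta>. y > ereal (ln (real (covering_number E \<delta>)) / - ln \<delta>)) (at_right 0)"
    unfolding eventually_at_right_field using b by auto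
qed

lemma cn_pos:
  assumes h: "continuous_on {0..1} h" and e: "e > 0"
  shows "covering_number (graph01 h) e \<ge> 1"
proof -
  obtain C where C: "finite C" "\<forall>S\<in>C. bounded S \<and> diameter S \<le> e" "graph01 h \<subseteq> \<Union>C"
    using cover_exists[OF h e] by blast
  have "(\<lambda>_::unit. (0::real, h 0)) ` {()} \<subseteq> graph01 h" unfolding graph01_def by auto
  from cn_ge[OF C _ this] show ?thesis by simp
qed

lemma osc_bound:
  assumes f: "continuous_on {0..1} f" and g: "continuous_on {0..1} g" and h: "continuous_on {0..1} h"
    and AB: "A \<ge> 0" "B \<ge> 0"
    and L: "\<And>x y. x \<in> {0..1} \<Longrightarrow> y \<in> {0..1} \<Longrightarrow> \<bar>h x - h y\<bar> \<le> A * \<bar>f x - f y\<bar> + B * \<bar>g x - g y\<bar>"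
    and d: "d > 0" and j: "j < ncol d"
  shows "osc h d j \<le> A * osc f d j + B * osc g d j"
proof -
  have ih: "h ` col d j = {lo h d j .. hi h d j}" "lo h d j \<le> hi h d j" using col_img[OF h d j] by auto
  have iF: "f ` col d j = {lo f d j .. hi f d j}" using col_img[OF f d j] by auto
  have iG: "g ` col d j = {lo g d j .. hi g d j}" using col_img[OF g d j] by auto
  obtain x1 where x1: "x1 \<in> col d j" "h x1 = hi h d j" using ih by (metis atLeastAtMost_iff imageE order_refl)
  obtain x2 where x2: "x2 \<in> col d j" "h x2 = lo h d j" using ih by (metis atLeastAtMost_iff imageE order_refl)
  have sub: "col d j \<subseteq> {0..1}" using col_basic(4)[OF d j] .
  have "osc h d j = \<bar>h x1 - h x2\<bar>" using x1 x2 ih unfolding osc_def by simp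
  also have "\<dots> \<le> A * \<bar>f x1 - f x2\<bar> + B * \<bar>g x1 - g x2\<bar>" by (rule L) (use x1 x2 sub in auto)
  also have "\<dots> \<le> A * osc f d j + B * osc g d j"
  proof (intro add_mono mult_left_mono AB)
    have "f x1 \<in> {lo f d j .. hi f d j}" "f x2 \<in> {lo f d j .. hi f d j}" using iF x1 x2 by auto
    then show "\<bar>f x1 - f x2\<bar> \<le> osc f d j" unfolding osc_def by auto
    have "g x1 \<in> {lo g d j .. hi g d j}" "g x2 \<in> {lo g d j .. hi g d j}" using iG x1 x2 by auto
    then show "\<bar>g x1 - g x2\<bar> \<le> osc g d j" unfolding osc_def by auto
  qed
  finally show ?thesis .
qed

lemma graph_main:
  assumes f: "continuous_on {0..1} f" and g: "continuous_on {0..1} g" and h: "continuous_on {0..1} h"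
    and AB: "A \<ge> 0" "B \<ge> 0"
    and L: "\<And>x y. x \<in> {0..1} \<Longrightarrow> y \<in> {0..1} \<Longrightarrow> \<bar>h x - h y\<bar> \<le> A * \<bar>f x - f y\<bar> + B * \<bar>g x - g y\<bar>"
  shows "upper_box_dim (graph01 h) \<le> max (upper_box_dim (graph01 f)) (upper_box_dim (graph01 g))"
proof (rule dim_le[where C = "8 * (1 + A + B)" and ez = 1])
  show "0 < 8 * (1 + A + B)" using AB by simp
  show "(0::real) < 1" by simp
  show "\<And>d. d > 0 \<Longrightarrow> 1 \<le> covering_number (graph01 h) d \<and> 1 \<le> covering_number (graph01 f) d \<and> 1 \<le> covering_number (graph01 g) d"
    using cn_pos f g h by blast
  fix d :: real assume d: "0 < d" "d < 1"
  define e where "e = 2 * d"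
  have e: "e > 0" unfolding e_def using d by simp
  let ?Nf = "real (covering_number (graph01 f) d)"
  let ?Ng = "real (covering_number (graph01 g) d)"
  have "real (covering_number (graph01 h) (4*d)) = real (covering_number (graph01 h) (2*e))"
    unfolding e_def by simp
  also have "\<dots> \<le> (\<Sum>j<ncol e. osc h e j / e + 1)" by (rule cn_upper[OF h e])
  also have "\<dots> \<le> (\<Sum>j<ncol e. (1 + A + B) * ((osc f e j / e + 1) + (osc g e j / e + 1)))"
  proof (rule sum_mono)
    fix j assume "j \<in> {..<ncol e}"
    then have j: "j < ncol e" by simp
    have o: "osc h e j \<le> A * osc f e j + B * osc g e j" by (rule osc_bound[OF f g h AB L e j])
    have of0: "0 \<le> osc f e j / e" "0 \<le> osc g e j / e"
      using col_img(2)[OF f e j] col_img(2)[OF g e j] e unfolding osc_def by auto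
    have "osc h e j / e \<le> A * (osc f e j / e) + B * (osc g e j / e)"
      using o e by (simp add: divide_right_mono add_divide_distrib[symmetric])
    moreover have "(1 + A + B) * ((osc f e j / e + 1) + (osc g e j / e + 1))
       = (osc f e j / e + 1) + (osc g e j / e + 1) + A * (osc f e j / e) + A * (osc g e j / e + 2)
         + B * (osc f e j / e + 2) + B * (osc g e j / e)"
    proof -
      have "\<And>u v::real. (1 + A + B) * ((u + 1) + (v + 1)) = (u + 1) + (v + 1) + A * u + A * (v + 2) + B * (u + 2) + B * v"
        by (simp add: algebra_simps)
      then show ?thesis .
    qed
    moreover have "0 \<le> A * (osc g e j / e + 2)" "0 \<le> B * (osc f e j / e + 2)" using AB of0 by auto
    ultimately show "osc h e j / e + 1 \<le> (1 + A + B) * ((osc f e j / e + 1) + (osc g e j / e + 1))"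
      using of0 by linarith
  qed
  also have "\<dots> = (1 + A + B) * ((\<Sum>j<ncol e. osc f e j / e + 1) + (\<Sum>j<ncol e. osc g e j / e + 1))"
    unfolding sum.distrib[symmetric] by (rule sum_distrib_left[symmetric])
  also have "\<dots> \<le> (1 + A + B) * (4 * ?Nf + 4 * ?Ng)"
  proof (rule mult_left_mono)
    show "0 \<le> 1 + A + B" using AB by simp
    have "e/2 = d" unfolding e_def by simp
    then show "(\<Sum>j<ncol e. osc f e j / e + 1) + (\<Sum>j<ncol e. osc g e j / e + 1) \<le> 4 * ?Nf + 4 * ?Ng"
      using cn_lower[OF f e] cn_lower[OF g e] by simp
  qed
  also have "\<dots> \<le> 8 * (1 + A + B) * max ?Nf ?Ng"
  proof -
    have "4 * ?Nf + 4 * ?Ng \<le> 8 * max ?Nf ?Ng" by simp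
    then have "(1 + A + B) * (4 * ?Nf + 4 * ?Ng) \<le> (1 + A + B) * (8 * max ?Nf ?Ng)"
      using AB by (intro mult_left_mono) auto
    moreover have "(1 + A + B) * (8 * M) = 8 * (1 + A + B) * M" for M :: real by (simp add: algebra_simps)
    ultimately show ?thesis by metis
  qed
  finally show "real (covering_number (graph01 h) (4*d)) \<le> 8 * (1 + A + B) * max ?Nf ?Ng" .
qed

lemma bound_on:
  fixes f :: "real \<Rightarrow> real"
  assumes "continuous_on {0..1::real} f"
  shows "\<exists>M\<ge>0. \<forall>x\<in>{0..1}. \<bar>f x\<bar> \<le> M"
proof -
  have "compact (f ` {0..1})" using assms by (intro compact_continuous_image) auto
  then have "bounded (f ` {0..1})" by (rule compact_imp_bounded)
  then obtain M where "\<forall>y\<in>f ` {0..1}. norm y \<le> M" unfolding bounded_iff by blast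
  then have "\<forall>x\<in>{0..1}. \<bar>f x\<bar> \<le> max M 0" by auto
  then show ?thesis by (intro exI[of _ "max M 0"]) auto
qed

lemma lower_on:
  fixes g :: "real \<Rightarrow> real"
  assumes "continuous_on {0..1::real} g" "\<forall>x\<in>{0..1}. g x \<noteq> 0"
  shows "\<exists>m>0. \<forall>x\<in>{0..1}. m \<le> \<bar>g x\<bar>"
proof -
  have "continuous_on {0..1} (\<lambda>x. \<bar>g x\<bar>)" using assms(1) by (intro continuous_intros)
  then obtain x0 where x0: "x0 \<in> {0..1::real}" "\<forall>y\<in>{0..1}. \<bar>g x0\<bar> \<le> \<bar>g y\<bar>"
    using continuous_attains_inf[of "{0..1::real}" "\<lambda>x. \<bar>g x\<bar>"] by auto
  then show ?thesis using assms(2) by (intro exI[of _ "\<bar>g x0\<bar>"]) auto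
qed

lemma lip_prod:
  fixes f g :: "real \<Rightarrow> real"
  assumes f: "continuous_on {0..1} f" and g: "continuous_on {0..1} g"
  shows "\<exists>A\<ge>0. \<exists>B\<ge>0. \<forall>x\<in>{0..1}. \<forall>y\<in>{0..1}.
     \<bar>f x * g x - f y * g y\<bar> \<le> A * \<bar>f x - f y\<bar> + B * \<bar>g x - g y\<bar>"
proof -
  obtain Mf where Mf: "Mf \<ge> 0" "\<forall>x\<in>{0..1}. \<bar>f x\<bar> \<le> Mf" using bound_on[OF f] by blast
  obtain Mg where Mg: "Mg \<ge> 0" "\<forall>x\<in>{0..1}. \<bar>g x\<bar> \<le> Mg" using bound_on[OF g] by blast
  have "\<bar>f x * g x - f y * g y\<bar> \<le> Mg * \<bar>f x - f y\<bar> + Mf * \<bar>g x - g y\<bar>"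
    if xy: "x \<in> {0..1}" "y \<in> {0..1}" for x y
  proof -
    have "f x * g x - f y * g y = (f x - f y) * g x + f y * (g x - g y)" by (simp add: algebra_simps)
    then have "\<bar>f x * g x - f y * g y\<bar> \<le> \<bar>f x - f y\<bar> * \<bar>g x\<bar> + \<bar>f y\<bar> * \<bar>g x - g y\<bar>"
      by (simp add: abs_mult[symmetric] abs_triangle_ineq)
    also have "\<dots> \<le> \<bar>f x - f y\<bar> * Mg + Mf * \<bar>g x - g y\<bar>"
      using Mf Mg xy by (intro add_mono mult_left_mono mult_right_mono) auto
    finally show ?thesis by (simp add: mult.commute)
  qed
  then show ?thesis using Mf(1) Mg(1) by blast
qed

lemma lip_quot:
  fixes f g :: "real \<Rightarrow> real"
  assumes f: "continuous_on {0..1} f" and g: "continuous_on {0..1} g" and g0: "\<forall>x\<in>{0..1}. g x \<noteq> 0"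
  shows "\<exists>A\<ge>0. \<exists>B\<ge>0. \<forall>x\<in>{0..1}. \<forall>y\<in>{0..1}.
     \<bar>f x - f y\<bar> \<le> A * \<bar>f x * g x - f y * g y\<bar> + B * \<bar>g x - g y\<bar>"
proof -
  obtain Mf where Mf: "Mf \<ge> 0" "\<forall>x\<in>{0..1}. \<bar>f x\<bar> \<le> Mf" using bound_on[OF f] by blast
  obtain m where m: "m > 0" "\<forall>x\<in>{0..1}. m \<le> \<bar>g x\<bar>" using lower_on[OF g g0] by blast
  have key: "\<bar>f x - f y\<bar> \<le> (1/m) * \<bar>f x * g x - f y * g y\<bar> + (Mf/m) * \<bar>g x - g y\<bar>"
    if xy: "x \<in> {0..1}" "y \<in> {0..1}" for x y
  proof -
    have gx: "g x \<noteq> 0" "m \<le> \<bar>g x\<bar>" using g0 m xy by auto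
    have "f x - f y = (f x * g x - f y * g y) / g x + f y * (g y - g x) / g x"
      using gx by (simp add: field_simps)
    then have "\<bar>f x - f y\<bar> \<le> \<bar>f x * g x - f y * g y\<bar> / \<bar>g x\<bar> + \<bar>f y\<bar> * \<bar>g x - g y\<bar> / \<bar>g x\<bar>"
      by (metis abs_divide abs_mult abs_minus_commute abs_triangle_ineq)
    also have "\<dots> \<le> \<bar>f x * g x - f y * g y\<bar> / m + Mf * \<bar>g x - g y\<bar> / m"
    proof (intro add_mono)
      show "\<bar>f x * g x - f y * g y\<bar> / \<bar>g x\<bar> \<le> \<bar>f x * g x - f y * g y\<bar> / m"
        using gx m by (intro divide_left_mono) auto
      have "\<bar>f y\<bar> * \<bar>g x - g y\<bar> / \<bar>g x\<bar> \<le> \<bar>f y\<bar> * \<bar>g x - g y\<bar> / m"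
        using gx m by (intro divide_left_mono) auto
      also have "\<dots> \<le> Mf * \<bar>g x - g y\<bar> / m"
        using Mf xy m by (intro divide_right_mono mult_right_mono) auto
      finally show "\<bar>f y\<bar> * \<bar>g x - g y\<bar> / \<bar>g x\<bar> \<le> Mf * \<bar>g x - g y\<bar> / m" .
    qed
    finally show ?thesis by simp
  qed
  have p: "0 \<le> 1/m" "0 \<le> Mf/m" using Mf(1) m(1) by auto
  show ?thesis using key p by blast
qed

theorem proposition3p5:
  fixes f g :: "real \<Rightarrow> real"
  assumes "continuous_on {0..1} f" and "continuous_on {0..1} g"
    and "\<forall>x\<in>{0..1}. f x \<noteq> 0" and "\<forall>x\<in>{0..1}. g x \<noteq> 0"
    and "upper_box_dim (graph01 f) \<noteq> upper_box_dim (graph01 g)"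
  shows "upper_box_dim (graph01 (\<lambda>x. f x * g x))
           = max (upper_box_dim (graph01 f)) (upper_box_dim (graph01 g))"
proof -
  let ?h = "\<lambda>x. f x * g x"
  have hc: "continuous_on {0..1} ?h" using assms(1,2) by (intro continuous_intros)
  obtain A B where AB: "A \<ge> 0" "B \<ge> 0" "\<forall>x\<in>{0..1}. \<forall>y\<in>{0..1}.
     \<bar>f x * g x - f y * g y\<bar> \<le> A * \<bar>f x - f y\<bar> + B * \<bar>g x - g y\<bar>"
    using lip_prod[OF assms(1,2)] by blast
  have c1: "upper_box_dim (graph01 ?h) \<le> max (upper_box_dim (graph01 f)) (upper_box_dim (graph01 g))"
    by (rule graph_main[OF assms(1,2) hc AB(1,2)]) (use AB(3) in auto)
  obtain A1 B1 where AB1: "A1 \<ge> 0" "B1 \<ge> 0" "\<forall>x\<in>{0..1}. \<forall>y\<in>{0..1}.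
     \<bar>f x - f y\<bar> \<le> A1 * \<bar>f x * g x - f y * g y\<bar> + B1 * \<bar>g x - g y\<bar>"
    using lip_quot[OF assms(1,2,4)] by blast
  have c2: "upper_box_dim (graph01 f) \<le> max (upper_box_dim (graph01 ?h)) (upper_box_dim (graph01 g))"
    by (rule graph_main[OF hc assms(2,1) AB1(1,2)]) (use AB1(3) in auto)
  obtain A2 B2 where AB2: "A2 \<ge> 0" "B2 \<ge> 0" "\<forall>x\<in>{0..1}. \<forall>y\<in>{0..1}.
     \<bar>g x - g y\<bar> \<le> A2 * \<bar>g x * f x - g y * f y\<bar> + B2 * \<bar>f x - f y\<bar>"
    using lip_quot[OF assms(2,1,3)] by blast
  have c3: "upper_box_dim (graph01 g) \<le> max (upper_box_dim (graph01 ?h)) (upper_box_dim (graph01 f))"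
    by (rule graph_main[OF hc assms(1,2) AB2(1,2)]) (use AB2(3) in \<open>auto simp: mult.commute\<close>)
  show ?thesis
  proof (cases "upper_box_dim (graph01 f) < upper_box_dim (graph01 g)")
    case True
    then show ?thesis using c1 c3 by (auto simp: max_def split: if_splits)
  next
    case False
    then have "upper_box_dim (graph01 g) < upper_box_dim (graph01 f)" using assms(5) by auto
    then show ?thesis using c1 c2 by (auto simp: max_def split: if_splits)
  qed
qed

end
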